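(* Let $A,B$ be non-empty sets, $I$ a non-empty index set, $\{V_i\}_{i\in I}\subseteq\mathcal R(A)$, $\{W_i\}_{i\in I}\subseteq\mathcal R(B)$, $Z\in\mathcal R(A,B)$, and let $R\in\mathcal R(A,B)$ be a solution to $WL^{2\text{-}3}(A,B,I,V_i,W_i,Z)$. Then (a) $R\circ R^{-1}$ is a solution to $WL^{1\text{-}4}(A,I,V_i,Z\circ Z^{-1})$; (b) $R^{-1}\circ R$ is a solution to $WL^{1\text{-}4}(B,I,W_i,Z^{-1}\circ Z)$.
   Context: $\mathcal L=(L,\wedge,\vee,\otimes,\to,0,1)$ is a complete residuated lattice. For non-empty sets $X,Y$, $\mathcal R(X,Y)$ is the set of fuzzy relations $X\times Y\to L$, $\mathcal R(X)=\mathcal R(X,X)$, ordered pointwise; $R^{-1}(y,x)=R(x,y)$; $(R\circ S)(x,t)=\bigvee_{y}R(x,y)\otimes S(y,t)$. $WL^{2\text{-}3}(A,B,I,V_i,W_i,Z)$ (unknown $U\in\mathcal R(A,B)$): $U^{-1}\circ V_i\le W_i\circ U^{-1}$ and $U\circ W_i\le V_i\circ U$ for all $i\in I$, and $U\le Z$. For a non-empty set $X$, $\{V_i\}\subseteq\mathcal R(X)$, $W\in\mathcal R(X)$, $WL^{1\text{-}4}(X,I,V_i,W)$ (unknown $U\in\mathcal R(X)$): $U\circ V_i\le V_i\circ U$ and $U^{-1}\circ V_i\le V_i\circ U^{-1}$ for all $i\in I$, and $U\le W$, $U^{-1}\le W$. *)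

theory Defs
  imports Main
begin

class complete_residuated_lattice = complete_lattice + comm_monoid_mult +
  fixes residuum :: "'a \<Rightarrow> 'a \<Rightarrow> 'a" (infixr "\<rightharpoonup>" 25)
  assumes one_is_top: "1 = top"
  assumes residuation: "x * y \<le> z \<longleftrightarrow> x \<le> (y \<rightharpoonup> z)"

type_synonym ('a, 'b, 'l) frel = "'a \<Rightarrow> 'b \<Rightarrow> 'l"

definition conv :: "('a, 'b, 'l) frel \<Rightarrow> ('b, 'a, 'l) frel" where
  "conv R = (\<lambda>y x. R x y)"

definition rcomp :: "('a, 'b, 'l::complete_residuated_lattice) frel \<Rightarrow> ('b, 'c, 'l) frel \<Rightarrow> ('a, 'c, 'l) frel"
  (infixl "\<circ>\<^sub>R" 75) where
  "rcomp R S = (\<lambda>x t. SUP y. R x y * S y t)"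

definition WL23 :: "'i set \<Rightarrow> ('i \<Rightarrow> ('a,'a,'l::complete_residuated_lattice) frel)
    \<Rightarrow> ('i \<Rightarrow> ('b,'b,'l) frel) \<Rightarrow> ('a,'b,'l) frel \<Rightarrow> ('a,'b,'l) frel \<Rightarrow> bool" where
  "WL23 I V W Z U \<longleftrightarrow>
     (\<forall>i\<in>I. conv U \<circ>\<^sub>R V i \<le> W i \<circ>\<^sub>R conv U \<and> U \<circ>\<^sub>R W i \<le> V i \<circ>\<^sub>R U) \<and> U \<le> Z"

definition WL14 :: "'i set \<Rightarrow> ('i \<Rightarrow> ('a,'a,'l::complete_residuated_lattice) frel)
    \<Rightarrow> ('a,'a,'l) frel \<Rightarrow> ('a,'a,'l) frel \<Rightarrow> bool" where
  "WL14 I V W U \<longleftrightarrow>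
     (\<forall>i\<in>I. U \<circ>\<^sub>R V i \<le> V i \<circ>\<^sub>R U \<and> conv U \<circ>\<^sub>R V i \<le> V i \<circ>\<^sub>R conv U) \<and> U \<le> W \<and> conv U \<le> W"

end

theory Submission
  imports Defs
begin

lemma crl_mono: "(a::'l::complete_residuated_lattice) \<le> b \<Longrightarrow> a * x \<le> b * x"
proof -
  assume "a \<le> b"
  have "b \<le> (x \<rightharpoonup> b * x)" using residuation by blast
  then have "a \<le> (x \<rightharpoonup> b * x)" using \<open>a \<le> b\<close> by (rule order_trans[rotated])
  then show ?thesis using residuation by blast
qed

lemma crl_mono2: "(a::'l::complete_residuated_lattice) \<le> b \<Longrightarrow> c \<le> d \<Longrightarrow> a * c \<le> b * d"
  by (metis crl_mono mult.commute order_trans)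

lemma Sup_mult: "(SUP y. f y) * (x::'l::complete_residuated_lattice) = (SUP y. f y * x)"
proof (rule antisym)
  have "\<forall>y. f y \<le> (x \<rightharpoonup> (SUP y. f y * x))"
    using residuation by (metis SUP_upper UNIV_I)
  then have "(SUP y. f y) \<le> (x \<rightharpoonup> (SUP y. f y * x))" by (simp add: SUP_least)
  then show "(SUP y. f y) * x \<le> (SUP y. f y * x)" using residuation by blast
  show "(SUP y. f y * x) \<le> (SUP y. f y) * x"
    by (rule SUP_least) (simp add: crl_mono SUP_upper)
qed

lemma mult_Sup: "(x::'l::complete_residuated_lattice) * (SUP y. f y) = (SUP y. x * f y)"
  using Sup_mult[of f x] by (simp add: mult.commute)

lemma rcomp_assoc: "(R \<circ>\<^sub>R S) \<circ>\<^sub>R T = R \<circ>\<^sub>R (S \<circ>\<^sub>R T)"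
proof -
  have "\<And>x t. (SUP z. (SUP y. R x y * S y z) * T z t) = (SUP y. R x y * (SUP z. S y z * T z t))"
  proof -
    fix x t
    have "(SUP z. (SUP y. R x y * S y z) * T z t) = (SUP z. SUP y. R x y * S y z * T z t)"
      by (simp add: Sup_mult)
    also have "\<dots> = (SUP y. SUP z. R x y * S y z * T z t)" by (rule SUP_commute)
    also have "\<dots> = (SUP y. R x y * (SUP z. S y z * T z t))"
      by (simp add: mult_Sup mult.assoc)
    finally show "?thesis x t" .
  qed
  then show ?thesis by (simp add: rcomp_def fun_eq_iff)
qed

lemma rcomp_mono: "R \<le> R' \<Longrightarrow> S \<le> S' \<Longrightarrow> R \<circ>\<^sub>R S \<le> R' \<circ>\<^sub>R S'"
  unfolding rcomp_def le_fun_def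
  by (intro allI SUP_mono) (metis crl_mono2 UNIV_I order_refl)

lemma conv_rcomp: "conv (R \<circ>\<^sub>R S) = conv S \<circ>\<^sub>R conv R"
  by (simp add: conv_def rcomp_def fun_eq_iff mult.commute)

lemma conv_conv[simp]: "conv (conv R) = R" by (simp add: conv_def)

lemma conv_mono: "R \<le> S \<Longrightarrow> conv R \<le> conv S" by (simp add: conv_def le_fun_def)

theorem proposition7p1:
  fixes I :: "'i set"
    and V :: "'i \<Rightarrow> ('a, 'a, 'l::complete_residuated_lattice) frel"
    and W :: "'i \<Rightarrow> ('b, 'b, 'l) frel"
    and Z R :: "('a, 'b, 'l) frel"
  assumes "I \<noteq> {}"
    and "WL23 I V W Z R"
  shows "WL14 I V (Z \<circ>\<^sub>R conv Z) (R \<circ>\<^sub>R conv R) \<and>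
         WL14 I W (conv Z \<circ>\<^sub>R Z) (conv R \<circ>\<^sub>R R)"
proof -
  have h1: "\<And>i. i \<in> I \<Longrightarrow> conv R \<circ>\<^sub>R V i \<le> W i \<circ>\<^sub>R conv R"
   and h2: "\<And>i. i \<in> I \<Longrightarrow> R \<circ>\<^sub>R W i \<le> V i \<circ>\<^sub>R R"
   and h3: "R \<le> Z" using assms(2) unfolding WL23_def by auto
  have s1: "conv (R \<circ>\<^sub>R conv R) = R \<circ>\<^sub>R conv R" by (simp add: conv_rcomp)
  have s2: "conv (conv R \<circ>\<^sub>R R) = conv R \<circ>\<^sub>R R" by (simp add: conv_rcomp)
  have a: "R \<circ>\<^sub>R conv R \<circ>\<^sub>R V i \<le> V i \<circ>\<^sub>R (R \<circ>\<^sub>R conv R)" if "i \<in> I" for i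
  proof -
    have "R \<circ>\<^sub>R conv R \<circ>\<^sub>R V i = R \<circ>\<^sub>R (conv R \<circ>\<^sub>R V i)" by (simp add: rcomp_assoc)
    also have "\<dots> \<le> R \<circ>\<^sub>R (W i \<circ>\<^sub>R conv R)" by (rule rcomp_mono) (auto simp: h1 that)
    also have "\<dots> = (R \<circ>\<^sub>R W i) \<circ>\<^sub>R conv R" by (simp add: rcomp_assoc)
    also have "\<dots> \<le> (V i \<circ>\<^sub>R R) \<circ>\<^sub>R conv R" by (rule rcomp_mono) (auto simp: h2 that)
    also have "\<dots> = V i \<circ>\<^sub>R (R \<circ>\<^sub>R conv R)" by (simp add: rcomp_assoc)
    finally show ?thesis .
  qed
  have b: "conv R \<circ>\<^sub>R R \<circ>\<^sub>R W i \<le> W i \<circ>\<^sub>R (conv R \<circ>\<^sub>R R)" if "i \<in> I" for i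
  proof -
    have "conv R \<circ>\<^sub>R R \<circ>\<^sub>R W i = conv R \<circ>\<^sub>R (R \<circ>\<^sub>R W i)" by (simp add: rcomp_assoc)
    also have "\<dots> \<le> conv R \<circ>\<^sub>R (V i \<circ>\<^sub>R R)" by (rule rcomp_mono) (auto simp: h2 that)
    also have "\<dots> = (conv R \<circ>\<^sub>R V i) \<circ>\<^sub>R R" by (simp add: rcomp_assoc)
    also have "\<dots> \<le> (W i \<circ>\<^sub>R conv R) \<circ>\<^sub>R R" by (rule rcomp_mono) (auto simp: h1 that)
    also have "\<dots> = W i \<circ>\<^sub>R (conv R \<circ>\<^sub>R R)" by (simp add: rcomp_assoc)
    finally show ?thesis .
  qed
  have c1: "R \<circ>\<^sub>R conv R \<le> Z \<circ>\<^sub>R conv Z" by (intro rcomp_mono conv_mono h3)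
  have c2: "conv R \<circ>\<^sub>R R \<le> conv Z \<circ>\<^sub>R Z" by (intro rcomp_mono conv_mono h3)
  show ?thesis unfolding WL14_def s1 s2 using a b c1 c2 by auto
qed

end
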